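(* (i) For every normalized one-parameter subgroup $\lambda$ of $\mathrm{SL}_2\times\mathrm{SL}_3$, the set $M^{-}(\lambda)$ is contained in $M^{-}(\lambda_i)$ for some $i\in\{1,\dots,7\}$, where $\lambda_1=(5,-5,3,-1,-2)$, $\lambda_2=(4,-4,2,1,-3)$, $\lambda_3=(4,-4,4,-1,-3)$, $\lambda_4=(3,-3,4,-1,-3)$, $\lambda_5=(1,-1,3,-1,-2)$, $\lambda_6=(1,-1,5,-1,-4)$, $\lambda_7=(2,-2,3,1,-4)$. (ii) A $(2,3)$-hypersurface $S=\{f=0\}\subset\mathbb{P}^1\times\mathbb{P}^2$ is unstable if $f$ is of one of the following forms, where $c,c_i$ denote cubic forms, $q,q_i$ quadratic forms, $l,l_i$ linear forms in the indicated variables and $\mu,\nu$ constants: (U1) $f=x_1^2c(y_0,y_1,y_2)+x_0x_1[c_0(y_1,y_2)+\mu y_0y_2^2]$; (U2) $f=x_1^2c_0(y_0,y_1,y_2)+x_0x_1(y_2^2l(y_0,y_1,y_2)+\mu y_2y_1^2)+\nu x_0^2y_2^3$; (U3) $f=x_1^2[c_0(y_1,y_2)+y_0q(y_1,y_2)+y_0^2l(y_1,y_2)]+x_0x_1[c_1(y_1,y_2)+\mu y_0y_2^2]+\nu x_0^2y_2^3$; (U4) $f=x_1^2[c_0(y_1,y_2)+y_0q(y_1,y_2)+\mu y_0^2y_2]+x_0x_1[c_1(y_1,y_2)+\nu y_0y_2^2]+x_0^2y_2^2l(y_1,y_2)$; (U5) $f=x_1^2[c_0(y_1,y_2)+y_0q_1(y_1,y_2)]+x_0x_1[c_1(y_1,y_2)+\mu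 y_0y_2^2]+x_0^2c_2(y_1,y_2)$; (U6) $f=x_1^2[c_0(y_1,y_2)+y_0y_2l(y_1,y_2)]+x_0x_1[c_1(y_1,y_2)+\mu y_0y_2^2]+x_0^2[c_2(y_1,y_2)+\nu y_0y_2^2]$; (U7) $f=x_1^2[c(y_1,y_2)+y_0y_2l_0(y_1,y_2)+\mu y_0^2y_2]+x_0x_1(y_2^2l_1(y_0,y_1,y_2)+\nu y_2y_1^2)+x_0^2y_2^2l_2(y_0,y_1,y_2)$.
   Context: Bihomogeneous coordinates $(x_0,x_1;y_0,y_1,y_2)$ on $\mathbb{P}^1\times\mathbb{P}^2$; stability refers to GIT for the natural action of $\mathrm{SL}_2\times\mathrm{SL}_3$ on $\mathbb{P}(H^0(\mathcal{O}(2,3)))$. A tuple $(a,-a,b,c,-b-c)$ denotes the one-parameter subgroup $t\mapsto\mathrm{diag}(t^a,t^{-a},t^b,t^c,t^{-b-c})$ acting on $(x_0,x_1,y_0,y_1,y_2)$; it is normalized if $a\geq0$ and $b\geq c\geq-b-c$. The weight of the monomial $x_0^ux_1^{2-u}y_0^vy_1^wy_2^{3-v-w}$ is $au-a(2-u)+bv+cw+(-b-c)(3-v-w)$. $M^{-}(\lambda)$ is the set of bidegree $(2,3)$ monomials of negative weight with respect to $\lambda$. *)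

theory Defs
  imports "HOL-Analysis.Analysis"
begin

text \<open>A bidegree (2,3) monomial x0^u x1^(2-u) y0^v y1^w y2^(3-v-w) is encoded by (u,v,w)
  with u <= 2 and v + w <= 3.  A one-parameter subgroup (a,-a,b,c,-b-c) is encoded by (a,b,c).\<close>

definition monomials23 :: "(nat \<times> nat \<times> nat) set" where
  "monomials23 = {(u,v,w). u \<le> 2 \<and> v + w \<le> 3}"

type_synonym ops = "int \<times> int \<times> int"

definition weight :: "ops \<Rightarrow> nat \<times> nat \<times> nat \<Rightarrow> int" where
  "weight l m = (case l of (a,b,c) \<Rightarrow> case m of (u,v,w) \<Rightarrow>
      a * int u - a * (2 - int u) + b * int v + c * int w + (- b - c) * (3 - int v - int w))"

definition normalized :: "ops \<Rightarrow> bool" where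
  "normalized l = (case l of (a,b,c) \<Rightarrow> a \<ge> 0 \<and> b \<ge> c \<and> c \<ge> - b - c)"

definition Mneg :: "ops \<Rightarrow> (nat \<times> nat \<times> nat) set" where
  "Mneg l = {m \<in> monomials23. weight l m < 0}"

definition lam :: "nat \<Rightarrow> ops" where
  "lam i = (if i = 1 then (5,3,-1) else if i = 2 then (4,2,1) else if i = 3 then (4,4,-1)
     else if i = 4 then (3,4,-1) else if i = 5 then (1,3,-1) else if i = 6 then (1,5,-1)
     else (2,3,1))"

definition bform :: "nat \<Rightarrow> (nat \<Rightarrow> complex) \<Rightarrow> complex \<Rightarrow> complex \<Rightarrow> complex" where
  "bform d \<beta> y1 y2 = (\<Sum>k\<le>d. \<beta> k * y1 ^ k * y2 ^ (d - k))"

definition tform :: "nat \<Rightarrow> (nat \<Rightarrow> nat \<Rightarrow> complex) \<Rightarrow> complex \<Rightarrow> complex \<Rightarrow> complex \<Rightarrow> complex" where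
  "tform d \<alpha> y0 y1 y2 = (\<Sum>v\<le>d. \<Sum>w\<le>d - v. \<alpha> v w * y0 ^ v * y1 ^ w * y2 ^ (d - v - w))"

type_synonym form23 = "complex \<Rightarrow> complex \<Rightarrow> complex \<Rightarrow> complex \<Rightarrow> complex \<Rightarrow> complex"

text \<open>GIT-unstable for SL2 x SL3: 0 lies in the closure of the orbit of f.  Since the space of
  (2,3)-forms is finite-dimensional, convergence of coefficients is equivalent to pointwise
  convergence of the polynomial functions.\<close>
definition unstable :: "form23 \<Rightarrow> bool" where
  "unstable f \<longleftrightarrow> (\<exists>(A :: nat \<Rightarrow> complex^2^2) (B :: nat \<Rightarrow> complex^3^3).
     (\<forall>n. det (A n) = 1 \<and> det (B n) = 1) \<and>
     (\<forall>(x :: complex^2) (y :: complex^3).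
        (\<lambda>n. f ((A n *v x)$1) ((A n *v x)$2) ((B n *v y)$1) ((B n *v y)$2) ((B n *v y)$3))
          \<longlonglongrightarrow> 0))"

definition U1 :: "form23 \<Rightarrow> bool" where
  "U1 f \<longleftrightarrow> (\<exists>c c0 \<mu>. \<forall>x0 x1 y0 y1 y2. f x0 x1 y0 y1 y2 =
     x1^2 * tform 3 c y0 y1 y2 + x0 * x1 * (bform 3 c0 y1 y2 + \<mu> * y0 * y2^2))"

definition U2 :: "form23 \<Rightarrow> bool" where
  "U2 f \<longleftrightarrow> (\<exists>c0 l \<mu> \<nu>. \<forall>x0 x1 y0 y1 y2. f x0 x1 y0 y1 y2 =
     x1^2 * tform 3 c0 y0 y1 y2 + x0 * x1 * (y2^2 * tform 1 l y0 y1 y2 + \<mu> * y2 * y1^2)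
     + \<nu> * x0^2 * y2^3)"

definition U3 :: "form23 \<Rightarrow> bool" where
  "U3 f \<longleftrightarrow> (\<exists>c0 q l c1 \<mu> \<nu>. \<forall>x0 x1 y0 y1 y2. f x0 x1 y0 y1 y2 =
     x1^2 * (bform 3 c0 y1 y2 + y0 * bform 2 q y1 y2 + y0^2 * bform 1 l y1 y2)
     + x0 * x1 * (bform 3 c1 y1 y2 + \<mu> * y0 * y2^2) + \<nu> * x0^2 * y2^3)"

definition U4 :: "form23 \<Rightarrow> bool" where
  "U4 f \<longleftrightarrow> (\<exists>c0 q c1 l \<mu> \<nu>. \<forall>x0 x1 y0 y1 y2. f x0 x1 y0 y1 y2 =
     x1^2 * (bform 3 c0 y1 y2 + y0 * bform 2 q y1 y2 + \<mu> * y0^2 * y2)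
     + x0 * x1 * (bform 3 c1 y1 y2 + \<nu> * y0 * y2^2) + x0^2 * y2^2 * bform 1 l y1 y2)"

definition U5 :: "form23 \<Rightarrow> bool" where
  "U5 f \<longleftrightarrow> (\<exists>c0 q1 c1 c2 \<mu>. \<forall>x0 x1 y0 y1 y2. f x0 x1 y0 y1 y2 =
     x1^2 * (bform 3 c0 y1 y2 + y0 * bform 2 q1 y1 y2)
     + x0 * x1 * (bform 3 c1 y1 y2 + \<mu> * y0 * y2^2) + x0^2 * bform 3 c2 y1 y2)"

definition U6 :: "form23 \<Rightarrow> bool" where
  "U6 f \<longleftrightarrow> (\<exists>c0 l c1 c2 \<mu> \<nu>. \<forall>x0 x1 y0 y1 y2. f x0 x1 y0 y1 y2 =
     x1^2 * (bform 3 c0 y1 y2 + y0 * y2 * bform 1 l y1 y2)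
     + x0 * x1 * (bform 3 c1 y1 y2 + \<mu> * y0 * y2^2)
     + x0^2 * (bform 3 c2 y1 y2 + \<nu> * y0 * y2^2))"

definition U7 :: "form23 \<Rightarrow> bool" where
  "U7 f \<longleftrightarrow> (\<exists>c l0 l1 l2 \<mu> \<nu>. \<forall>x0 x1 y0 y1 y2. f x0 x1 y0 y1 y2 =
     x1^2 * (bform 3 c y1 y2 + y0 * y2 * bform 1 l0 y1 y2 + \<mu> * y0^2 * y2)
     + x0 * x1 * (y2^2 * tform 1 l1 y0 y1 y2 + \<nu> * y2 * y1^2)
     + x0^2 * y2^2 * tform 1 l2 y0 y1 y2)"

end

theory Submission
  imports Defs
begin
lemma powi_lim:
  assumes "k < 0"
  shows "(\<lambda>n. (of_nat (Suc n) :: complex) powi k) \<longlonglongrightarrow> 0"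
proof -
  have e: "(of_nat (Suc n) :: complex) powi k = (inverse (of_nat (Suc n))) ^ nat (-k)" for n
    using assms by (simp add: power_int_def power_inverse)
  have "(\<lambda>n. inverse (of_nat (Suc n) :: complex)) \<longlonglongrightarrow> 0"
    using LIMSEQ_Suc[OF lim_inverse_n] by simp
  then have "(\<lambda>n. (inverse (of_nat (Suc n) :: complex)) ^ nat (-k)) \<longlonglongrightarrow> 0 ^ nat (-k)"
    by (intro tendsto_power)
  moreover have "(0::complex) ^ nat (-k) = 0" using assms by simp
  ultimately show ?thesis unfolding e by simp
qed

lemma mono_scale:
  fixes T :: complex
  assumes "T \<noteq> 0" "u \<le> 2" "v + w \<le> 3"
  shows "(T powi a * x0)^u * (T powi (-a) * x1)^(2-u) * (T powi b * y0)^v * (T powi c * y1)^w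
         * (T powi (-b-c) * y2)^(3-v-w)
       = T powi (weight (a,b,c) (u,v,w)) * (x0^u * x1^(2-u) * y0^v * y1^w * y2^(3-v-w))"
proof -
  have i1: "int (2 - u) = 2 - int u" using assms by simp
  have i2: "int (3 - v - w) = 3 - int v - int w" using assms by simp
  have pa: "T powi (m+n) = T powi m * T powi n" for m n using assms power_int_add by blast
  have we: "weight (a,b,c) (u,v,w) = a * int u + (-a * int (2-u)) + b * int v
     + c * int w + (-b-c) * int (3-v-w)"
    using assms by (simp add: weight_def i1 i2 of_nat_diff algebra_simps)
  have "T powi (weight (a,b,c) (u,v,w)) = T powi (a * int u) * T powi (-a * int (2-u)) * T powi (b * int v)
     * T powi (c * int w) * T powi ((-b-c) * int (3-v-w))"
    unfolding we using assms by (simp only: pa)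
  also have "\<dots> = (T powi a)^u * (T powi (-a))^(2-u) * (T powi b)^v * (T powi c)^w * (T powi (-b-c))^(3-v-w)"
    by (simp only: power_int_power')
  finally show ?thesis by (simp add: power_mult_distrib algebra_simps)
qed

lemma unstable_crit:
  fixes f :: form23 and F :: "nat \<Rightarrow> nat \<Rightarrow> nat \<Rightarrow> complex"
  assumes rep: "\<And>x0 x1 y0 y1 y2. f x0 x1 y0 y1 y2 = (\<Sum>u\<le>2. \<Sum>v\<le>3. \<Sum>w\<le>3-v.
      F u v w * (x0^u * x1^(2-u) * y0^v * y1^w * y2^(3-v-w)))"
  and sup: "\<And>u v w. u \<le> 2 \<Longrightarrow> v \<le> 3 \<Longrightarrow> w \<le> 3 - v \<Longrightarrow> F u v w \<noteq> 0 \<Longrightarrow> weight l (u,v,w) < 0"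
  shows "unstable f"
proof -
  obtain a b c where l: "l = (a,b,c)" by (cases l) auto
  define T where "T n = (of_nat (Suc n) :: complex)" for n
  have T0: "T n \<noteq> 0" for n unfolding T_def by (simp del: of_nat_Suc)
  define A where "A n = ((\<chi> i j. if i = j then (if i = 1 then T n powi a else T n powi (-a)) else 0) :: complex^2^2)" for n
  define B where "B n = ((\<chi> i j. if i = j then (if i = 1 then T n powi b else if i = 2 then T n powi c else T n powi (-b-c)) else 0) :: complex^3^3)" for n
  have dA: "det (A n) = 1" for n
    using T0[of n] by (simp add: A_def det_2 power_int_minus)
  have dB: "det (B n) = 1" for n
  proof -
    have "det (B n) = T n powi b * T n powi c * T n powi (-b-c)"
      by (simp add: B_def det_3)
    also have "T n powi (-b-c) = inverse (T n powi (b+c))"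
      using power_int_minus[of "T n" "b+c"] by simp
    also have "T n powi (b+c) = T n powi b * T n powi c" using T0[of n] by (simp add: power_int_add)
    finally show ?thesis using T0[of n] by (simp add: field_simps)
  qed
  have Ax: "(A n *v x)$1 = T n powi a * x$1" "(A n *v x)$2 = T n powi (-a) * x$2" for n x
    by (simp_all add: A_def matrix_vector_mult_def sum_2)
  have By: "(B n *v y)$1 = T n powi b * y$1" "(B n *v y)$2 = T n powi c * y$2"
     "(B n *v y)$3 = T n powi (-b-c) * y$3" for n y
    by (simp_all add: B_def matrix_vector_mult_def sum_3)
  show ?thesis unfolding unstable_def
  proof (intro exI conjI allI)
    fix n show "det (A n) = 1" "det (B n) = 1" by (rule dA, rule dB)
  next
    fix x :: "complex^2" and y :: "complex^3"
    show "(\<lambda>n. f ((A n *v x)$1) ((A n *v x)$2) ((B n *v y)$1) ((B n *v y)$2) ((B n *v y)$3)) \<longlonglongrightarrow> 0"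
      unfolding Ax By rep
    proof (intro tendsto_null_sum)
      fix u v w :: nat assume u: "u \<in> {..2}" and v: "v \<in> {..3}" and w: "w \<in> {..3-v}"
      have e: "F u v w * ((T n powi a * x$1)^u * (T n powi (-a) * x$2)^(2-u) * (T n powi b * y$1)^v
         * (T n powi c * y$2)^w * (T n powi (-b-c) * y$3)^(3-v-w))
        = (F u v w * ((x$1)^u * (x$2)^(2-u) * (y$1)^v * (y$2)^w * (y$3)^(3-v-w))) * T n powi (weight (a,b,c) (u,v,w))" for n
        using mono_scale[OF T0[of n], of u v w a "x$1" "x$2" b "y$1" c "y$2" "y$3"] u v w by simp
      show "(\<lambda>n. F u v w * ((T n powi a * x$1)^u * (T n powi (-a) * x$2)^(2-u) * (T n powi b * y$1)^v
         * (T n powi c * y$2)^w * (T n powi (-b-c) * y$3)^(3-v-w))) \<longlonglongrightarrow> 0"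
        unfolding e
      proof (cases "F u v w = 0")
        case True then show "(\<lambda>n. (F u v w * ((x$1)^u * (x$2)^(2-u) * (y$1)^v * (y$2)^w * (y$3)^(3-v-w))) * T n powi (weight (a,b,c) (u,v,w))) \<longlonglongrightarrow> 0" by simp
      next
        case False
        then have "weight (a,b,c) (u,v,w) < 0" using sup[of u v w] u v w l by auto
        then show "(\<lambda>n. (F u v w * ((x$1)^u * (x$2)^(2-u) * (y$1)^v * (y$2)^w * (y$3)^(3-v-w))) * T n powi (weight (a,b,c) (u,v,w))) \<longlonglongrightarrow> 0"
          unfolding T_def using powi_lim by (auto intro: tendsto_mult_left_zero tendsto_mult_right_zero)
      qed
    qed
  qed
qed

lemma at2: "{..2::nat} = {0,1,2}" and at3: "{..3::nat} = {0,1,2,3}" and at1: "{..1::nat} = {0,1}"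
  and at0: "{..0::nat} = {0}" by auto

lemmas expand = tform_def bform_def at0 at1 at2 at3

lemma cases_uvw:
  assumes "u \<le> 2" "v \<le> 3" "w \<le> 3 - (v::nat)"
  shows "(u::nat) \<in> {0,1,2} \<and> v \<in> {0,1,2,3} \<and> w \<in> {0,1,2,3} \<and> v + w \<le> 3"
  using assms by auto

lemma U1_unst: assumes "U1 f" shows "unstable f"
proof -
  from assms obtain c c0 \<mu> where f: "\<And>x0 x1 y0 y1 y2. f x0 x1 y0 y1 y2 =
     x1^2 * tform 3 c y0 y1 y2 + x0 * x1 * (bform 3 c0 y1 y2 + \<mu> * y0 * y2^2)"
    unfolding U1_def by blast
  define F where "F u v w = (if u = 0 then c v w else if u = 1 then
      (if v = 0 then c0 w else if v = 1 \<and> w = 0 then \<mu> else 0) else 0)" for u v w :: nat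
  show ?thesis
  proof (rule unstable_crit[where F = F and l = "(5,3,-1)"])
    fix x0 x1 y0 y1 y2
    show "f x0 x1 y0 y1 y2 = (\<Sum>u\<le>2. \<Sum>v\<le>3. \<Sum>w\<le>3-v.
      F u v w * (x0^u * x1^(2-u) * y0^v * y1^w * y2^(3-v-w)))"
      unfolding f by (simp add: expand F_def algebra_simps)
  next
    fix u v w :: nat assume "u \<le> 2" "v \<le> 3" "w \<le> 3 - v" "F u v w \<noteq> 0"
    then show "weight (5,3,-1) (u,v,w) < 0"
      using cases_uvw[of u v w] by (auto simp: F_def weight_def)
  qed
qed

lemma U2_unst: assumes "U2 f" shows "unstable f"
  using assms unfolding U2_def
  apply (elim exE)
  subgoal premises f for c0 l \<mu> \<nu>
proof -
  define F where "F u v w = (if u = 0 then c0 v w else if u = 1 then (if v = 0 then (if w = 0 then l 0 0 else if w = 1 then l 0 1 else if w = 2 then \<mu> else 0) else if v = 1 \<and> w = 0 then l 1 0 else 0) else (if v = 0 \<and> w = 0 then \<nu> else 0))" for u v w :: nat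
  show ?thesis
  proof (rule unstable_crit[where F = F and l = "(4,2,1)"])
    fix x0 x1 y0 y1 y2
    show "f x0 x1 y0 y1 y2 = (\<Sum>u\<le>2. \<Sum>v\<le>3. \<Sum>w\<le>3-v.
      F u v w * (x0^u * x1^(2-u) * y0^v * y1^w * y2^(3-v-w)))"
      by (simp add: f expand F_def algebra_simps power2_eq_square power3_eq_cube)
  next
    fix u v w :: nat assume "u \<le> 2" "v \<le> 3" "w \<le> 3 - v" "F u v w \<noteq> 0"
    then show "weight (4,2,1) (u,v,w) < 0"
      using cases_uvw[of u v w] by (auto simp: F_def weight_def)
  qed
qed
  done

lemma U3_unst: assumes "U3 f" shows "unstable f"
  using assms unfolding U3_def
  apply (elim exE)
  subgoal premises f for c0 q l c1 \<mu> \<nu>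
proof -
  define F where "F u v w = (if u = 0 then (if v = 0 then c0 w else if v = 1 then q w else if v = 2 then l w else 0) else if u = 1 then (if v = 0 then c1 w else if v = 1 \<and> w = 0 then \<mu> else 0) else (if v = 0 \<and> w = 0 then \<nu> else 0))" for u v w :: nat
  show ?thesis
  proof (rule unstable_crit[where F = F and l = "(4,4,-1)"])
    fix x0 x1 y0 y1 y2
    show "f x0 x1 y0 y1 y2 = (\<Sum>u\<le>2. \<Sum>v\<le>3. \<Sum>w\<le>3-v.
      F u v w * (x0^u * x1^(2-u) * y0^v * y1^w * y2^(3-v-w)))"
      by (simp add: f expand F_def algebra_simps power2_eq_square power3_eq_cube)
  next
    fix u v w :: nat assume "u \<le> 2" "v \<le> 3" "w \<le> 3 - v" "F u v w \<noteq> 0"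
    then show "weight (4,4,-1) (u,v,w) < 0"
      using cases_uvw[of u v w] by (auto simp: F_def weight_def)
  qed
qed
  done

lemma U4_unst: assumes "U4 f" shows "unstable f"
  using assms unfolding U4_def
  apply (elim exE)
  subgoal premises f for c0 q c1 l \<mu> \<nu>
proof -
  define F where "F u v w = (if u = 0 then (if v = 0 then c0 w else if v = 1 then q w else if v = 2 \<and> w = 0 then \<mu> else 0) else if u = 1 then (if v = 0 then c1 w else if v = 1 \<and> w = 0 then \<nu> else 0) else (if v = 0 \<and> w \<le> 1 then l w else 0))" for u v w :: nat
  show ?thesis
  proof (rule unstable_crit[where F = F and l = "(3,4,-1)"])
    fix x0 x1 y0 y1 y2
    show "f x0 x1 y0 y1 y2 = (\<Sum>u\<le>2. \<Sum>v\<le>3. \<Sum>w\<le>3-v.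
      F u v w * (x0^u * x1^(2-u) * y0^v * y1^w * y2^(3-v-w)))"
      by (simp add: f expand F_def algebra_simps power2_eq_square power3_eq_cube)
  next
    fix u v w :: nat assume "u \<le> 2" "v \<le> 3" "w \<le> 3 - v" "F u v w \<noteq> 0"
    then show "weight (3,4,-1) (u,v,w) < 0"
      using cases_uvw[of u v w] by (auto simp: F_def weight_def)
  qed
qed
  done

lemma U5_unst: assumes "U5 f" shows "unstable f"
  using assms unfolding U5_def
  apply (elim exE)
  subgoal premises f for c0 q1 c1 c2 \<mu>
proof -
  define F where "F u v w = (if u = 0 then (if v = 0 then c0 w else if v = 1 then q1 w else 0) else if u = 1 then (if v = 0 then c1 w else if v = 1 \<and> w = 0 then \<mu> else 0) else (if v = 0 then c2 w else 0))" for u v w :: nat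
  show ?thesis
  proof (rule unstable_crit[where F = F and l = "(1,3,-1)"])
    fix x0 x1 y0 y1 y2
    show "f x0 x1 y0 y1 y2 = (\<Sum>u\<le>2. \<Sum>v\<le>3. \<Sum>w\<le>3-v.
      F u v w * (x0^u * x1^(2-u) * y0^v * y1^w * y2^(3-v-w)))"
      by (simp add: f expand F_def algebra_simps power2_eq_square power3_eq_cube)
  next
    fix u v w :: nat assume "u \<le> 2" "v \<le> 3" "w \<le> 3 - v" "F u v w \<noteq> 0"
    then show "weight (1,3,-1) (u,v,w) < 0"
      using cases_uvw[of u v w] by (auto simp: F_def weight_def)
  qed
qed
  done

lemma U6_unst: assumes "U6 f" shows "unstable f"
  using assms unfolding U6_def
  apply (elim exE)
  subgoal premises f for c0 l c1 c2 \<mu> \<nu>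
proof -
  define F where "F u v w = (if u = 0 then (if v = 0 then c0 w else if v = 1 \<and> w \<le> 1 then l w else 0) else if u = 1 then (if v = 0 then c1 w else if v = 1 \<and> w = 0 then \<mu> else 0) else (if v = 0 then c2 w else if v = 1 \<and> w = 0 then \<nu> else 0))" for u v w :: nat
  show ?thesis
  proof (rule unstable_crit[where F = F and l = "(1,5,-1)"])
    fix x0 x1 y0 y1 y2
    show "f x0 x1 y0 y1 y2 = (\<Sum>u\<le>2. \<Sum>v\<le>3. \<Sum>w\<le>3-v.
      F u v w * (x0^u * x1^(2-u) * y0^v * y1^w * y2^(3-v-w)))"
      by (simp add: f expand F_def algebra_simps power2_eq_square power3_eq_cube)
  next
    fix u v w :: nat assume "u \<le> 2" "v \<le> 3" "w \<le> 3 - v" "F u v w \<noteq> 0"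
    then show "weight (1,5,-1) (u,v,w) < 0"
      using cases_uvw[of u v w] by (auto simp: F_def weight_def)
  qed
qed
  done

lemma U7_unst: assumes "U7 f" shows "unstable f"
  using assms unfolding U7_def
  apply (elim exE)
  subgoal premises f for c l0 l1 l2 \<mu> \<nu>
proof -
  define F where "F u v w = (if u = 0 then (if v = 0 then c w else if v = 1 \<and> w \<le> 1 then l0 w else if v = 2 \<and> w = 0 then \<mu> else 0) else if u = 1 then (if v = 0 then (if w = 0 then l1 0 0 else if w = 1 then l1 0 1 else if w = 2 then \<nu> else 0) else if v = 1 \<and> w = 0 then l1 1 0 else 0) else (if v = 0 \<and> w = 0 then l2 0 0 else if v = 0 \<and> w = 1 then l2 0 1 else if v = 1 \<and> w = 0 then l2 1 0 else 0))" for u v w :: nat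
  show ?thesis
  proof (rule unstable_crit[where F = F and l = "(2,3,1)"])
    fix x0 x1 y0 y1 y2
    show "f x0 x1 y0 y1 y2 = (\<Sum>u\<le>2. \<Sum>v\<le>3. \<Sum>w\<le>3-v.
      F u v w * (x0^u * x1^(2-u) * y0^v * y1^w * y2^(3-v-w)))"
      by (simp add: f expand F_def algebra_simps power2_eq_square power3_eq_cube)
  next
    fix u v w :: nat assume "u \<le> 2" "v \<le> 3" "w \<le> 3 - v" "F u v w \<noteq> 0"
    then show "weight (2,3,1) (u,v,w) < 0"
      using cases_uvw[of u v w] by (auto simp: F_def weight_def)
  qed
qed
  done

lemma arr: fixes a b c :: int assumes "a \<ge> 0" "b \<ge> c" "c \<ge> -b-c"
  shows "(0 \<le> 0*a + 0*b + 0*c \<and> 0 \<le> 0*a + 1*b + -1*c \<and> 0 \<le> 0*a + 1*b + 2*c \<and> 0 \<le> 0*a + 2*b + 1*c \<and> 0 \<le> 0*a + 3*b + 0*c \<and> 0 \<le> 2*a + -3*b + -3*c \<and> 0 \<le> 2*a + -2*b + -1*c \<and> 0 \<le> 2*a + -1*b + -2*c \<and> 0 \<le> 2*a + -1*b + 1*c \<and> 0 \<le> 2*a + 0*b + 0*c \<and> 0 \<le> 2*a + 0*b + 3*c \<and> 0 \<le> 2*a + 1*b + -1*c \<and> 0 \<le> 2*a + 1*b + 2*c \<and> 0 \<le> 2*a + 2*b + 1*c \<and> 0 \<le> 2*a + 3*b + 0*c) \<or> (0 \<le> 0*a + 0*b + 0*c \<and> 0 \<le> 0*a + 0*b + 3*c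 \<and> 0 \<le> 0*a + 1*b + -1*c \<and> 0 \<le> 0*a + 1*b + 2*c \<and> 0 \<le> 0*a + 2*b + 1*c \<and> 0 \<le> 0*a + 3*b + 0*c \<and> 0 \<le> 2*a + -2*b + -1*c \<and> 0 \<le> 2*a + -1*b + -2*c \<and> 0 \<le> 2*a + -1*b + 1*c \<and> 0 \<le> 2*a + 0*b + 0*c \<and> 0 \<le> 2*a + 0*b + 3*c \<and> 0 \<le> 2*a + 1*b + -1*c \<and> 0 \<le> 2*a + 1*b + 2*c \<and> 0 \<le> 2*a + 2*b + 1*c \<and> 0 \<le> 2*a + 3*b + 0*c) \<or> (0 \<le> -2*a + 3*b + 0*c \<and> 0 \<le> 0*a + 0*b + 0*c \<and> 0 \<le> 0*a + 1*b + -1*c \<and> 0 \<le> 0*a + 1*b + 2*c \<and> 0 \<le> 0*a + 2*b + 1*c \<and> 0 \<le> 0*a + 3*b + 0*c \<and> 0 \<le> 2*a + -2*b + -1*c \<and> 0 \<le> 2*a + -1*b + -2*c \<and> 0 \<le> 2*a + -1*b + 1*c \<and> 0 \<le> 2*a + 0*b + 0*c \<and> 0 \<le> 2*a + 0*b + 3*c \<and> 0 \<le> 2*a + 1*b + -1*c \<and> 0 \<le> 2*a + 1*b + 2*c \<and> 0 \<le> 2*a + 2*b + 1*c \<and> 0 \<le> 2*a + 3*b + 0*c) \<or> (0 \<le> -2*a + 2*b + 1*c \<and> 0 \<le> -2*a + 3*b + 0*c \<and> 0 \<le> 0*a + 0*b + 0*c \<and> 0 \<le> 0*a + 1*b + -1*c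 \<and> 0 \<le> 0*a + 1*b + 2*c \<and> 0 \<le> 0*a + 2*b + 1*c \<and> 0 \<le> 0*a + 3*b + 0*c \<and> 0 \<le> 2*a + -1*b + -2*c \<and> 0 \<le> 2*a + -1*b + 1*c \<and> 0 \<le> 2*a + 0*b + 0*c \<and> 0 \<le> 2*a + 0*b + 3*c \<and> 0 \<le> 2*a + 1*b + -1*c \<and> 0 \<le> 2*a + 1*b + 2*c \<and> 0 \<le> 2*a + 2*b + 1*c \<and> 0 \<le> 2*a + 3*b + 0*c) \<or> (0 \<le> -2*a + 1*b + -1*c \<and> 0 \<le> -2*a + 2*b + 1*c \<and> 0 \<le> -2*a + 3*b + 0*c \<and> 0 \<le> 0*a + 0*b + 0*c \<and> 0 \<le> 0*a + 1*b + -1*c \<and> 0 \<le> 0*a + 1*b + 2*c \<and> 0 \<le> 0*a + 2*b + 1*c \<and> 0 \<le> 0*a + 3*b + 0*c \<and> 0 \<le> 2*a + -1*b + -2*c \<and> 0 \<le> 2*a + 0*b + 0*c \<and> 0 \<le> 2*a + 1*b + -1*c \<and> 0 \<le> 2*a + 1*b + 2*c \<and> 0 \<le> 2*a + 2*b + 1*c \<and> 0 \<le> 2*a + 3*b + 0*c) \<or> (0 \<le> -2*a + 1*b + -1*c \<and> 0 \<le> -2*a + 1*b + 2*c \<and> 0 \<le> -2*a + 2*b + 1*c \<and> 0 \<le> -2*a + 3*b + 0*c \<and> 0 \<le> 0*a + 0*b + 0*c \<and> 0 \<le> 0*a + 1*b + -1*c \<and> 0 \<le> 0*a + 1*b + 2*c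 \<and> 0 \<le> 0*a + 2*b + 1*c \<and> 0 \<le> 0*a + 3*b + 0*c \<and> 0 \<le> 2*a + 0*b + 0*c \<and> 0 \<le> 2*a + 1*b + -1*c \<and> 0 \<le> 2*a + 1*b + 2*c \<and> 0 \<le> 2*a + 2*b + 1*c \<and> 0 \<le> 2*a + 3*b + 0*c) \<or> (0 \<le> -2*a + 1*b + 2*c \<and> 0 \<le> -2*a + 2*b + 1*c \<and> 0 \<le> -2*a + 3*b + 0*c \<and> 0 \<le> 0*a + 0*b + 0*c \<and> 0 \<le> 0*a + 0*b + 3*c \<and> 0 \<le> 0*a + 1*b + -1*c \<and> 0 \<le> 0*a + 1*b + 2*c \<and> 0 \<le> 0*a + 2*b + 1*c \<and> 0 \<le> 0*a + 3*b + 0*c \<and> 0 \<le> 2*a + -1*b + 1*c \<and> 0 \<le> 2*a + 0*b + 0*c \<and> 0 \<le> 2*a + 0*b + 3*c \<and> 0 \<le> 2*a + 1*b + -1*c \<and> 0 \<le> 2*a + 1*b + 2*c \<and> 0 \<le> 2*a + 2*b + 1*c \<and> 0 \<le> 2*a + 3*b + 0*c)"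
  using assms by smt

lemma sub1: fixes a b c :: int assumes "(0 \<le> 0*a + 0*b + 0*c \<and> 0 \<le> 0*a + 1*b + -1*c \<and> 0 \<le> 0*a + 1*b + 2*c \<and> 0 \<le> 0*a + 2*b + 1*c \<and> 0 \<le> 0*a + 3*b + 0*c \<and> 0 \<le> 2*a + -3*b + -3*c \<and> 0 \<le> 2*a + -2*b + -1*c \<and> 0 \<le> 2*a + -1*b + -2*c \<and> 0 \<le> 2*a + -1*b + 1*c \<and> 0 \<le> 2*a + 0*b + 0*c \<and> 0 \<le> 2*a + 0*b + 3*c \<and> 0 \<le> 2*a + 1*b + -1*c \<and> 0 \<le> 2*a + 1*b + 2*c \<and> 0 \<le> 2*a + 2*b + 1*c \<and> 0 \<le> 2*a + 3*b + 0*c)"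
  shows "Mneg (a,b,c) \<subseteq> Mneg (lam 1)"
  unfolding Mneg_def
proof
  fix m assume "m \<in> {m \<in> monomials23. weight (a,b,c) m < 0}"
  then obtain u v w where h: "m = (u,v,w)" "u \<le> 2" "v + w \<le> 3" "weight (a,b,c) (u,v,w) < 0"
    by (cases m) (auto simp: monomials23_def)
  then have "u \<in> {0,1,2}" "v \<in> {0,1,2,3}" "w \<in> {0,1,2,3}" by auto
  then have "weight (lam 1) (u,v,w) < 0" using h assms by (auto simp: weight_def lam_def)
  then show "m \<in> {m \<in> monomials23. weight (lam 1) m < 0}" using h by (simp add: monomials23_def)
qed

lemma sub2: fixes a b c :: int assumes "(0 \<le> 0*a + 0*b + 0*c \<and> 0 \<le> 0*a + 0*b + 3*c \<and> 0 \<le> 0*a + 1*b + -1*c \<and> 0 \<le> 0*a + 1*b + 2*c \<and> 0 \<le> 0*a + 2*b + 1*c \<and> 0 \<le> 0*a + 3*b + 0*c \<and> 0 \<le> 2*a + -2*b + -1*c \<and> 0 \<le> 2*a + -1*b + -2*c \<and> 0 \<le> 2*a + -1*b + 1*c \<and> 0 \<le> 2*a + 0*b + 0*c \<and> 0 \<le> 2*a + 0*b + 3*c \<and> 0 \<le> 2*a + 1*b + -1*c \<and> 0 \<le> 2*a + 1*b + 2*c \<and> 0 \<le> 2*a + 2*b + 1*c \<and> 0 \<le> 2*a + 3*b + 0*c)"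
  shows "Mneg (a,b,c) \<subseteq> Mneg (lam 2)"
  unfolding Mneg_def
proof
  fix m assume "m \<in> {m \<in> monomials23. weight (a,b,c) m < 0}"
  then obtain u v w where h: "m = (u,v,w)" "u \<le> 2" "v + w \<le> 3" "weight (a,b,c) (u,v,w) < 0"
    by (cases m) (auto simp: monomials23_def)
  then have "u \<in> {0,1,2}" "v \<in> {0,1,2,3}" "w \<in> {0,1,2,3}" by auto
  then have "weight (lam 2) (u,v,w) < 0" using h assms by (auto simp: weight_def lam_def)
  then show "m \<in> {m \<in> monomials23. weight (lam 2) m < 0}" using h by (simp add: monomials23_def)
qed

lemma sub3: fixes a b c :: int assumes "(0 \<le> -2*a + 3*b + 0*c \<and> 0 \<le> 0*a + 0*b + 0*c \<and> 0 \<le> 0*a + 1*b + -1*c \<and> 0 \<le> 0*a + 1*b + 2*c \<and> 0 \<le> 0*a + 2*b + 1*c \<and> 0 \<le> 0*a + 3*b + 0*c \<and> 0 \<le> 2*a + -2*b + -1*c \<and> 0 \<le> 2*a + -1*b + -2*c \<and> 0 \<le> 2*a + -1*b + 1*c \<and> 0 \<le> 2*a + 0*b + 0*c \<and> 0 \<le> 2*a + 0*b + 3*c \<and> 0 \<le> 2*a + 1*b + -1*c \<and> 0 \<le> 2*a + 1*b + 2*c \<and> 0 \<le> 2*a + 2*b + 1*c \<and> 0 \<le> 2*a + 3*b + 0*c)"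
  shows "Mneg (a,b,c) \<subseteq> Mneg (lam 3)"
  unfolding Mneg_def
proof
  fix m assume "m \<in> {m \<in> monomials23. weight (a,b,c) m < 0}"
  then obtain u v w where h: "m = (u,v,w)" "u \<le> 2" "v + w \<le> 3" "weight (a,b,c) (u,v,w) < 0"
    by (cases m) (auto simp: monomials23_def)
  then have "u \<in> {0,1,2}" "v \<in> {0,1,2,3}" "w \<in> {0,1,2,3}" by auto
  then have "weight (lam 3) (u,v,w) < 0" using h assms by (auto simp: weight_def lam_def)
  then show "m \<in> {m \<in> monomials23. weight (lam 3) m < 0}" using h by (simp add: monomials23_def)
qed

lemma sub4: fixes a b c :: int assumes "(0 \<le> -2*a + 2*b + 1*c \<and> 0 \<le> -2*a + 3*b + 0*c \<and> 0 \<le> 0*a + 0*b + 0*c \<and> 0 \<le> 0*a + 1*b + -1*c \<and> 0 \<le> 0*a + 1*b + 2*c \<and> 0 \<le> 0*a + 2*b + 1*c \<and> 0 \<le> 0*a + 3*b + 0*c \<and> 0 \<le> 2*a + -1*b + -2*c \<and> 0 \<le> 2*a + -1*b + 1*c \<and> 0 \<le> 2*a + 0*b + 0*c \<and> 0 \<le> 2*a + 0*b + 3*c \<and> 0 \<le> 2*a + 1*b + -1*c \<and> 0 \<le> 2*a + 1*b + 2*c \<and> 0 \<le> 2*a + 2*b + 1*c \<and> 0 \<le> 2*a + 3*b + 0*c)"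
  shows "Mneg (a,b,c) \<subseteq> Mneg (lam 4)"
  unfolding Mneg_def
proof
  fix m assume "m \<in> {m \<in> monomials23. weight (a,b,c) m < 0}"
  then obtain u v w where h: "m = (u,v,w)" "u \<le> 2" "v + w \<le> 3" "weight (a,b,c) (u,v,w) < 0"
    by (cases m) (auto simp: monomials23_def)
  then have "u \<in> {0,1,2}" "v \<in> {0,1,2,3}" "w \<in> {0,1,2,3}" by auto
  then have "weight (lam 4) (u,v,w) < 0" using h assms by (auto simp: weight_def lam_def)
  then show "m \<in> {m \<in> monomials23. weight (lam 4) m < 0}" using h by (simp add: monomials23_def)
qed

lemma sub5: fixes a b c :: int assumes "(0 \<le> -2*a + 1*b + -1*c \<and> 0 \<le> -2*a + 2*b + 1*c \<and> 0 \<le> -2*a + 3*b + 0*c \<and> 0 \<le> 0*a + 0*b + 0*c \<and> 0 \<le> 0*a + 1*b + -1*c \<and> 0 \<le> 0*a + 1*b + 2*c \<and> 0 \<le> 0*a + 2*b + 1*c \<and> 0 \<le> 0*a + 3*b + 0*c \<and> 0 \<le> 2*a + -1*b + -2*c \<and> 0 \<le> 2*a + 0*b + 0*c \<and> 0 \<le> 2*a + 1*b + -1*c \<and> 0 \<le> 2*a + 1*b + 2*c \<and> 0 \<le> 2*a + 2*b + 1*c \<and> 0 \<le> 2*a + 3*b + 0*c)"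
  shows "Mneg (a,b,c) \<subseteq> Mneg (lam 5)"
  unfolding Mneg_def
proof
  fix m assume "m \<in> {m \<in> monomials23. weight (a,b,c) m < 0}"
  then obtain u v w where h: "m = (u,v,w)" "u \<le> 2" "v + w \<le> 3" "weight (a,b,c) (u,v,w) < 0"
    by (cases m) (auto simp: monomials23_def)
  then have "u \<in> {0,1,2}" "v \<in> {0,1,2,3}" "w \<in> {0,1,2,3}" by auto
  then have "weight (lam 5) (u,v,w) < 0" using h assms by (auto simp: weight_def lam_def)
  then show "m \<in> {m \<in> monomials23. weight (lam 5) m < 0}" using h by (simp add: monomials23_def)
qed

lemma sub6: fixes a b c :: int assumes "(0 \<le> -2*a + 1*b + -1*c \<and> 0 \<le> -2*a + 1*b + 2*c \<and> 0 \<le> -2*a + 2*b + 1*c \<and> 0 \<le> -2*a + 3*b + 0*c \<and> 0 \<le> 0*a + 0*b + 0*c \<and> 0 \<le> 0*a + 1*b + -1*c \<and> 0 \<le> 0*a + 1*b + 2*c \<and> 0 \<le> 0*a + 2*b + 1*c \<and> 0 \<le> 0*a + 3*b + 0*c \<and> 0 \<le> 2*a + 0*b + 0*c \<and> 0 \<le> 2*a + 1*b + -1*c \<and> 0 \<le> 2*a + 1*b + 2*c \<and> 0 \<le> 2*a + 2*b + 1*c \<and> 0 \<le> 2*a + 3*b + 0*c)"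
  shows "Mneg (a,b,c) \<subseteq> Mneg (lam 6)"
  unfolding Mneg_def
proof
  fix m assume "m \<in> {m \<in> monomials23. weight (a,b,c) m < 0}"
  then obtain u v w where h: "m = (u,v,w)" "u \<le> 2" "v + w \<le> 3" "weight (a,b,c) (u,v,w) < 0"
    by (cases m) (auto simp: monomials23_def)
  then have "u \<in> {0,1,2}" "v \<in> {0,1,2,3}" "w \<in> {0,1,2,3}" by auto
  then have "weight (lam 6) (u,v,w) < 0" using h assms by (auto simp: weight_def lam_def)
  then show "m \<in> {m \<in> monomials23. weight (lam 6) m < 0}" using h by (simp add: monomials23_def)
qed

lemma sub7: fixes a b c :: int assumes "(0 \<le> -2*a + 1*b + 2*c \<and> 0 \<le> -2*a + 2*b + 1*c \<and> 0 \<le> -2*a + 3*b + 0*c \<and> 0 \<le> 0*a + 0*b + 0*c \<and> 0 \<le> 0*a + 0*b + 3*c \<and> 0 \<le> 0*a + 1*b + -1*c \<and> 0 \<le> 0*a + 1*b + 2*c \<and> 0 \<le> 0*a + 2*b + 1*c \<and> 0 \<le> 0*a + 3*b + 0*c \<and> 0 \<le> 2*a + -1*b + 1*c \<and> 0 \<le> 2*a + 0*b + 0*c \<and> 0 \<le> 2*a + 0*b + 3*c \<and> 0 \<le> 2*a + 1*b + -1*c \<and> 0 \<le> 2*a + 1*b + 2*c \<and> 0 \<le> 2*a + 2*b + 1*c \<and> 0 \<le> 2*a + 3*b + 0*c)"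
  shows "Mneg (a,b,c) \<subseteq> Mneg (lam 7)"
  unfolding Mneg_def
proof
  fix m assume "m \<in> {m \<in> monomials23. weight (a,b,c) m < 0}"
  then obtain u v w where h: "m = (u,v,w)" "u \<le> 2" "v + w \<le> 3" "weight (a,b,c) (u,v,w) < 0"
    by (cases m) (auto simp: monomials23_def)
  then have "u \<in> {0,1,2}" "v \<in> {0,1,2,3}" "w \<in> {0,1,2,3}" by auto
  then have "weight (lam 7) (u,v,w) < 0" using h assms by (auto simp: weight_def lam_def)
  then show "m \<in> {m \<in> monomials23. weight (lam 7) m < 0}" using h by (simp add: monomials23_def)
qed

lemma part1: "\<forall>l. normalized l \<longrightarrow> (\<exists>i\<in>{1..7::nat}. Mneg l \<subseteq> Mneg (lam i))"
proof (intro allI impI)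
  fix l assume "normalized l"
  then obtain a b c where l: "l = (a,b,c)" "a \<ge> 0" "b \<ge> c" "c \<ge> -b-c"
    unfolding normalized_def by (cases l) auto
  have "\<exists>i\<in>{1..7::nat}. Mneg (a,b,c) \<subseteq> Mneg (lam i)"
    using arr[OF l(2-4)]
  proof (elim disjE)
    assume "(0 \<le> 0*a + 0*b + 0*c \<and> 0 \<le> 0*a + 1*b + -1*c \<and> 0 \<le> 0*a + 1*b + 2*c \<and> 0 \<le> 0*a + 2*b + 1*c \<and> 0 \<le> 0*a + 3*b + 0*c \<and> 0 \<le> 2*a + -3*b + -3*c \<and> 0 \<le> 2*a + -2*b + -1*c \<and> 0 \<le> 2*a + -1*b + -2*c \<and> 0 \<le> 2*a + -1*b + 1*c \<and> 0 \<le> 2*a + 0*b + 0*c \<and> 0 \<le> 2*a + 0*b + 3*c \<and> 0 \<le> 2*a + 1*b + -1*c \<and> 0 \<le> 2*a + 1*b + 2*c \<and> 0 \<le> 2*a + 2*b + 1*c \<and> 0 \<le> 2*a + 3*b + 0*c)"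
    from sub1[OF this] show ?thesis by (intro bexI[of _ 1]) auto
  next
    assume "(0 \<le> 0*a + 0*b + 0*c \<and> 0 \<le> 0*a + 0*b + 3*c \<and> 0 \<le> 0*a + 1*b + -1*c \<and> 0 \<le> 0*a + 1*b + 2*c \<and> 0 \<le> 0*a + 2*b + 1*c \<and> 0 \<le> 0*a + 3*b + 0*c \<and> 0 \<le> 2*a + -2*b + -1*c \<and> 0 \<le> 2*a + -1*b + -2*c \<and> 0 \<le> 2*a + -1*b + 1*c \<and> 0 \<le> 2*a + 0*b + 0*c \<and> 0 \<le> 2*a + 0*b + 3*c \<and> 0 \<le> 2*a + 1*b + -1*c \<and> 0 \<le> 2*a + 1*b + 2*c \<and> 0 \<le> 2*a + 2*b + 1*c \<and> 0 \<le> 2*a + 3*b + 0*c)"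
    from sub2[OF this] show ?thesis by (intro bexI[of _ 2]) auto
  next
    assume "(0 \<le> -2*a + 3*b + 0*c \<and> 0 \<le> 0*a + 0*b + 0*c \<and> 0 \<le> 0*a + 1*b + -1*c \<and> 0 \<le> 0*a + 1*b + 2*c \<and> 0 \<le> 0*a + 2*b + 1*c \<and> 0 \<le> 0*a + 3*b + 0*c \<and> 0 \<le> 2*a + -2*b + -1*c \<and> 0 \<le> 2*a + -1*b + -2*c \<and> 0 \<le> 2*a + -1*b + 1*c \<and> 0 \<le> 2*a + 0*b + 0*c \<and> 0 \<le> 2*a + 0*b + 3*c \<and> 0 \<le> 2*a + 1*b + -1*c \<and> 0 \<le> 2*a + 1*b + 2*c \<and> 0 \<le> 2*a + 2*b + 1*c \<and> 0 \<le> 2*a + 3*b + 0*c)"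
    from sub3[OF this] show ?thesis by (intro bexI[of _ 3]) auto
  next
    assume "(0 \<le> -2*a + 2*b + 1*c \<and> 0 \<le> -2*a + 3*b + 0*c \<and> 0 \<le> 0*a + 0*b + 0*c \<and> 0 \<le> 0*a + 1*b + -1*c \<and> 0 \<le> 0*a + 1*b + 2*c \<and> 0 \<le> 0*a + 2*b + 1*c \<and> 0 \<le> 0*a + 3*b + 0*c \<and> 0 \<le> 2*a + -1*b + -2*c \<and> 0 \<le> 2*a + -1*b + 1*c \<and> 0 \<le> 2*a + 0*b + 0*c \<and> 0 \<le> 2*a + 0*b + 3*c \<and> 0 \<le> 2*a + 1*b + -1*c \<and> 0 \<le> 2*a + 1*b + 2*c \<and> 0 \<le> 2*a + 2*b + 1*c \<and> 0 \<le> 2*a + 3*b + 0*c)"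
    from sub4[OF this] show ?thesis by (intro bexI[of _ 4]) auto
  next
    assume "(0 \<le> -2*a + 1*b + -1*c \<and> 0 \<le> -2*a + 2*b + 1*c \<and> 0 \<le> -2*a + 3*b + 0*c \<and> 0 \<le> 0*a + 0*b + 0*c \<and> 0 \<le> 0*a + 1*b + -1*c \<and> 0 \<le> 0*a + 1*b + 2*c \<and> 0 \<le> 0*a + 2*b + 1*c \<and> 0 \<le> 0*a + 3*b + 0*c \<and> 0 \<le> 2*a + -1*b + -2*c \<and> 0 \<le> 2*a + 0*b + 0*c \<and> 0 \<le> 2*a + 1*b + -1*c \<and> 0 \<le> 2*a + 1*b + 2*c \<and> 0 \<le> 2*a + 2*b + 1*c \<and> 0 \<le> 2*a + 3*b + 0*c)"
    from sub5[OF this] show ?thesis by (intro bexI[of _ 5]) auto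
  next
    assume "(0 \<le> -2*a + 1*b + -1*c \<and> 0 \<le> -2*a + 1*b + 2*c \<and> 0 \<le> -2*a + 2*b + 1*c \<and> 0 \<le> -2*a + 3*b + 0*c \<and> 0 \<le> 0*a + 0*b + 0*c \<and> 0 \<le> 0*a + 1*b + -1*c \<and> 0 \<le> 0*a + 1*b + 2*c \<and> 0 \<le> 0*a + 2*b + 1*c \<and> 0 \<le> 0*a + 3*b + 0*c \<and> 0 \<le> 2*a + 0*b + 0*c \<and> 0 \<le> 2*a + 1*b + -1*c \<and> 0 \<le> 2*a + 1*b + 2*c \<and> 0 \<le> 2*a + 2*b + 1*c \<and> 0 \<le> 2*a + 3*b + 0*c)"
    from sub6[OF this] show ?thesis by (intro bexI[of _ 6]) auto
  next
    assume "(0 \<le> -2*a + 1*b + 2*c \<and> 0 \<le> -2*a + 2*b + 1*c \<and> 0 \<le> -2*a + 3*b + 0*c \<and> 0 \<le> 0*a + 0*b + 0*c \<and> 0 \<le> 0*a + 0*b + 3*c \<and> 0 \<le> 0*a + 1*b + -1*c \<and> 0 \<le> 0*a + 1*b + 2*c \<and> 0 \<le> 0*a + 2*b + 1*c \<and> 0 \<le> 0*a + 3*b + 0*c \<and> 0 \<le> 2*a + -1*b + 1*c \<and> 0 \<le> 2*a + 0*b + 0*c \<and> 0 \<le> 2*a + 0*b + 3*c \<and> 0 \<le> 2*a + 1*b + -1*c \<and> 0 \<le> 2*a + 1*b + 2*c \<and> 0 \<le> 2*a + 2*b + 1*c \<and> 0 \<le> 2*a + 3*b + 0*c)"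
    from sub7[OF this] show ?thesis by (intro bexI[of _ 7]) auto
  qed
  then show "\<exists>i\<in>{1..7::nat}. Mneg l \<subseteq> Mneg (lam i)" using l(1) by simp
qed
theorem lemma3p2:
  shows "(\<forall>l. normalized l \<longrightarrow> (\<exists>i\<in>{1..7::nat}. Mneg l \<subseteq> Mneg (lam i)))
    \<and> (\<forall>f. U1 f \<or> U2 f \<or> U3 f \<or> U4 f \<or> U5 f \<or> U6 f \<or> U7 f \<longrightarrow> unstable f)"
  using part1 U1_unst U2_unst U3_unst U4_unst U5_unst U6_unst U7_unst by blast

end
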